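(* Let ${\bf p},{\bf q}\in[0,1]^K$ with $q_k\le p_k$ for all $k$, let ${\bf u},{\bf v}\in\mathcal{S}_K$, and let $\Pi_{({\bf p},{\bf q})}\subseteq\mathcal{S}_K$ be an atomic lower and upper probability (ALUP) model generated by $({\bf p},{\bf q})$. If the aggregation scheme $({\bf u},{\bf v})$ induces Simpson's paradox in $({\bf p},{\bf q})$, then it incurs sure loss with respect to itself on $\Pi_{({\bf p},{\bf q})}$.
   Context: $\mathcal{S}_K=\{(v_1,\dots,v_K):\sum_k v_k=1,\ v_k\ge 0\}$. An ALUP model generated by $({\bf p},{\bf q})$ is a closed convex set $\Pi_{({\bf p},{\bf q})}$ of vectors $\boldsymbol\pi\in\mathcal{S}_K$ such that $\sup_{\boldsymbol\pi\in\Pi_{({\bf p},{\bf q})}}\pi_k=p_k$ and $\inf_{\boldsymbol\pi\in\Pi_{({\bf p},{\bf q})}}\pi_k=q_k$ for each $k$. The scheme $({\bf u},{\bf v})$ induces Simpson's paradox in $({\bf p},{\bf q})$ if ${\bf p}^\top{\bf u}<{\bf q}^\top{\bf v}$ or ${\bf q}^\top{\bf u}>{\bf p}^\top{\bf v}$. It incurs sure loss with respect to itself on a set $\Pi\subseteq\mathcal{S}_K$ if $\sup_{\boldsymbol\pi\in\Pi}\boldsymbol\pi^\top{\bf u}<\inf_{\boldsymbol\pi\in\Pi}\boldsymbol\pi^\top{\bf v}$ or $\inf_{\boldsymbol\pi\in\Pi}\boldsymbol\pi^\top{\bf u}>\sup_{\boldsymbol\pi\in\Pi}\boldsymbol\pi^\top{\bf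 v}$. *)

theory Defs
  imports "HOL-Analysis.Analysis"
begin

text \<open>The probability simplex S_K, with K = CARD('k).\<close>
definition prob_simplex :: "(real ^ 'k) set" where
  "prob_simplex = {v. (\<Sum>k\<in>UNIV. v $ k) = 1 \<and> (\<forall>k. v $ k \<ge> 0)}"

definition ALUP_model :: "real ^ 'k \<Rightarrow> real ^ 'k \<Rightarrow> (real ^ 'k) set \<Rightarrow> bool" where
  "ALUP_model p q PI \<longleftrightarrow> PI \<noteq> {} \<and> closed PI \<and> convex PI \<and> PI \<subseteq> prob_simplex \<and>
     (\<forall>k. (SUP pi\<in>PI. pi $ k) = p $ k \<and> (INF pi\<in>PI. pi $ k) = q $ k)"

definition induces_simpson :: "real ^ 'k \<Rightarrow> real ^ 'k \<Rightarrow> real ^ 'k \<Rightarrow> real ^ 'k \<Rightarrow> bool" where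
  "induces_simpson u v p q \<longleftrightarrow> p \<bullet> u < q \<bullet> v \<or> q \<bullet> u > p \<bullet> v"

definition sure_loss_self :: "real ^ 'k \<Rightarrow> real ^ 'k \<Rightarrow> (real ^ 'k) set \<Rightarrow> bool" where
  "sure_loss_self u v PI \<longleftrightarrow>
     (SUP pi\<in>PI. pi \<bullet> u) < (INF pi\<in>PI. pi \<bullet> v) \<or>
     (INF pi\<in>PI. pi \<bullet> u) > (SUP pi\<in>PI. pi \<bullet> v)"

end

theory Submission
  imports Defs
begin

lemma simplex_le1:
  assumes "x \<in> prob_simplex" shows "x $ k \<le> 1" "0 \<le> x $ k"
proof -
  have "x $ k \<le> (\<Sum>j\<in>UNIV. x $ j)"
    using assms by (intro member_le_sum) (auto simp: prob_simplex_def)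
  thus "x $ k \<le> 1" using assms by (simp add: prob_simplex_def)
  show "0 \<le> x $ k" using assms by (simp add: prob_simplex_def)
qed

lemma bounds:
  assumes A: "ALUP_model p q PI" and x: "x \<in> PI"
  shows "x $ k \<le> p $ k" "q $ k \<le> x $ k"
proof -
  have sub: "PI \<subseteq> prob_simplex" and e: "(SUP pi\<in>PI. pi $ k) = p $ k" "(INF pi\<in>PI. pi $ k) = q $ k"
    using A by (auto simp: ALUP_model_def)
  have ba: "bdd_above ((\<lambda>pi. pi $ k) ` PI)"
    using sub simplex_le1 by (intro bdd_aboveI[where M=1]) blast
  have bb: "bdd_below ((\<lambda>pi. pi $ k) ` PI)"
    using sub simplex_le1 by (intro bdd_belowI[where m=0]) blast
  show "x $ k \<le> p $ k" using cSUP_upper[OF x ba] e by simp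
  show "q $ k \<le> x $ k" using cINF_lower[OF bb x] e by simp
qed

lemma dot_le:
  fixes a b w :: "real ^ 'k"
  assumes "\<And>k. a $ k \<le> b $ k" "\<And>k. 0 \<le> w $ k"
  shows "a \<bullet> w \<le> b \<bullet> w"
  unfolding inner_vec_def
  by (intro sum_mono) (simp add: assms mult_right_mono)

theorem lemma4p2:
  fixes p q u v :: "real ^ 'k" and PI :: "(real ^ 'k) set"
  assumes "\<forall>k. 0 \<le> q $ k \<and> q $ k \<le> p $ k \<and> p $ k \<le> 1"
    and "u \<in> prob_simplex" and "v \<in> prob_simplex"
    and "ALUP_model p q PI"
    and "induces_simpson u v p q"
  shows "sure_loss_self u v PI"
proof -
  have ne: "PI \<noteq> {}" using assms(4) by (simp add: ALUP_model_def)
  have u0: "\<And>k. 0 \<le> u $ k" and v0: "\<And>k. 0 \<le> v $ k"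
    using assms(2,3) by (auto simp: prob_simplex_def)
  have up: "\<And>x w. x \<in> PI \<Longrightarrow> (\<And>k. 0 \<le> w $ k) \<Longrightarrow> x \<bullet> w \<le> p \<bullet> w"
    using bounds(1)[OF assms(4)] by (intro dot_le) auto
  have lo: "\<And>x w. x \<in> PI \<Longrightarrow> (\<And>k. 0 \<le> w $ k) \<Longrightarrow> q \<bullet> w \<le> x \<bullet> w"
    using bounds(2)[OF assms(4)] by (intro dot_le) auto
  have s1: "(SUP pi\<in>PI. pi \<bullet> w) \<le> p \<bullet> w" if "\<And>k. 0 \<le> w $ k" for w
    using ne up that by (intro cSUP_least) auto
  have i1: "q \<bullet> w \<le> (INF pi\<in>PI. pi \<bullet> w)" if "\<And>k. 0 \<le> w $ k" for w
    using ne lo that by (intro cINF_greatest) auto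
  show ?thesis
    using assms(5) s1[OF u0] s1[OF v0] i1[OF u0] i1[OF v0]
    unfolding induces_simpson_def sure_loss_self_def by auto
qed

end
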